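(* Let $X$ be a $T_1$ space. For open $U,V\subseteq X$ let $\mathrm{Homeo}^l_X(U,V)$ be the set of local homeomorphisms $U\to V$; with composition of maps and the inclusion maps $U\hookrightarrow V$ for $U\subseteq V$, this is a small category containing $X_{top}$ as a subcategory. Then $\mathrm{Homeo}^l_X$ is a pseudogroup sheaf on $X$.
   Context: $X_{top}$ denotes the set of open subsets of $X$, regarded as a category with exactly one morphism $U\to V$ iff $U\subseteq V$. Let $\mathcal C$ be a small category with $\mathrm{Ob}(\mathcal C)=X_{top}$ containing $X_{top}$ as a subcategory (identity on objects). For each open $V$, $\mathcal C(-,V)$ is a presheaf of sets on $X$ (restriction along $U'\subseteq U$ = precomposition with the inclusion morphism). For $x\in X$ let $\mathcal C_x(V)=\operatorname{colim}_{U\ni x}\mathcal C(U,V)$ (germ of $f\in\mathcal C(U,V)$ at $x$ written $f_x$); postcomposition with inclusions makes this functorial in $V$, and for $y\in X$ let $\mathcal C_x^y=\lim_{V\ni y}\mathcal C_x(V)$ (limit over open neighbourhoods of $y$), with projections $\mathcal C_x^y\to\mathcal C_x(V)$. Composition in $\mathcal C$ induces $\mathcal C_y^z\times\mathcal C_x^y\to\mathcal C_x^z$: given $\varphi\in\mathcal C_x^y,\psi\in\mathcal C_y^z$ and open $W\ni z$, choose $g\in\mathcal C(V,W)$, $y\in V$, representing the component $\psi_W$, and $f\in\mathcal C(U,V)$ representing $\varphi_V$; the $W$-component of $\psi\circ\varphi$ is $(g\circ f)_x$. This defines a category $\mathcal C^\star$ with objects the points of $X$ and $\mathcal C^\star(x,y)=\mathcal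 C_x^y$. For $X$ a $T_1$ space, a pre-pseudogroup on $X$ is such a $\mathcal C$ satisfying: (1) $\mathrm{Ob}(\mathcal C)=\mathrm{Ob}(X_{top})$; (2) for every open $V$ and $x\in X$, the map $\coprod_{y\in V}\mathcal C_x^y\to\mathcal C_x(V)$ induced by the projections is a bijection; (3) $\mathcal C^\star$ is a groupoid. A pseudogroup sheaf on $X$ is a pre-pseudogroup such that moreover (4) each presheaf $\mathcal C(-,V)$ is a sheaf. *)

theory Defs
  imports "HOL-Analysis.Analysis"
begin

text \<open>A "small category with objects the open sets of X, containing X_top as a
subcategory" is represented by: hom-sets indexed by pairs of sets, composition
cmp U V W g f (for f : U -> V, g : V -> W), and the inclusion morphisms incl U V.\<close>

record ('a, 'm) opcat =
  hom  :: "'a set \<Rightarrow> 'a set \<Rightarrow> 'm set"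
  cmp  :: "'a set \<Rightarrow> 'a set \<Rightarrow> 'a set \<Rightarrow> 'm \<Rightarrow> 'm \<Rightarrow> 'm"
  incl :: "'a set \<Rightarrow> 'a set \<Rightarrow> 'm"

definition cat_over :: "'a topology \<Rightarrow> ('a, 'm) opcat \<Rightarrow> bool" where
  "cat_over X C \<longleftrightarrow>
     (\<forall>U V f. f \<in> hom C U V \<longrightarrow> openin X U \<and> openin X V) \<and>
     (\<forall>U V W f g. f \<in> hom C U V \<longrightarrow> g \<in> hom C V W \<longrightarrow> cmp C U V W g f \<in> hom C U W) \<and>
     (\<forall>U V W Z f g h. f \<in> hom C U V \<longrightarrow> g \<in> hom C V W \<longrightarrow> h \<in> hom C W Z \<longrightarrow>
        cmp C U W Z h (cmp C U V W g f) = cmp C U V Z (cmp C V W Z h g) f) \<and>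
     (\<forall>U V f. f \<in> hom C U V \<longrightarrow>
        cmp C U U V f (incl C U U) = f \<and> cmp C U V V (incl C V V) f = f) \<and>
     (\<forall>U V. openin X U \<and> openin X V \<and> U \<subseteq> V \<longrightarrow> incl C U V \<in> hom C U V) \<and>
     (\<forall>U V W. openin X U \<and> openin X V \<and> openin X W \<and> U \<subseteq> V \<and> V \<subseteq> W \<longrightarrow>
        cmp C U V W (incl C V W) (incl C U V) = incl C U W)"

definition germ_dom :: "'a topology \<Rightarrow> ('a, 'm) opcat \<Rightarrow> 'a \<Rightarrow> 'a set \<Rightarrow> ('a set \<times> 'm) set" where
  "germ_dom X C x V = {(U, f). openin X U \<and> x \<in> U \<and> f \<in> hom C U V}"

definition germ_rel :: "'a topology \<Rightarrow> ('a, 'm) opcat \<Rightarrow> 'a \<Rightarrow> 'a set \<Rightarrow> (('a set \<times> 'm) \<times> ('a set \<times> 'm)) set" where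
  "germ_rel X C x V = {((U, f), (U', f')).
      (U, f) \<in> germ_dom X C x V \<and> (U', f') \<in> germ_dom X C x V \<and>
      (\<exists>W. openin X W \<and> x \<in> W \<and> W \<subseteq> U \<inter> U' \<and>
           cmp C W U V f (incl C W U) = cmp C W U' V f' (incl C W U'))}"

text \<open>C_x(V) = colim_{U ni x} C(U,V), as the set of equivalence classes.\<close>
definition stalk :: "'a topology \<Rightarrow> ('a, 'm) opcat \<Rightarrow> 'a \<Rightarrow> 'a set \<Rightarrow> ('a set \<times> 'm) set set" where
  "stalk X C x V = germ_dom X C x V // germ_rel X C x V"

definition germ :: "'a topology \<Rightarrow> ('a, 'm) opcat \<Rightarrow> 'a \<Rightarrow> 'a set \<Rightarrow> 'a set \<Rightarrow> 'm \<Rightarrow> ('a set \<times> 'm) set" where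
  "germ X C x V U f = germ_rel X C x V `` {(U, f)}"

definition nbhds :: "'a topology \<Rightarrow> 'a \<Rightarrow> 'a set set" where
  "nbhds X y = {V. openin X V \<and> y \<in> V}"

text \<open>C_x^y = lim_{V ni y} C_x(V): compatible families (extensional on the open
neighbourhoods of y); the transition map C_x(V) -> C_x(V') for V \<subseteq> V' is
postcomposition with the inclusion.\<close>
definition Cxy :: "'a topology \<Rightarrow> ('a, 'm) opcat \<Rightarrow> 'a \<Rightarrow> 'a \<Rightarrow> ('a set \<Rightarrow> ('a set \<times> 'm) set) set" where
  "Cxy X C x y = {\<phi>. \<phi> \<in> (\<Pi>\<^sub>E V\<in>nbhds X y. stalk X C x V) \<and>
      (\<forall>V V'. V \<in> nbhds X y \<and> V' \<in> nbhds X y \<and> V \<subseteq> V' \<longrightarrow>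
         (\<forall>(U, f) \<in> \<phi> V. germ X C x V' U (cmp C U V V' (incl C V V') f) = \<phi> V'))}"

definition star_id :: "'a topology \<Rightarrow> ('a, 'm) opcat \<Rightarrow> 'a \<Rightarrow> 'a set \<Rightarrow> ('a set \<times> 'm) set" where
  "star_id X C x = (\<lambda>V\<in>nbhds X x. germ X C x V V (incl C V V))"

definition star_comp :: "'a topology \<Rightarrow> ('a, 'm) opcat \<Rightarrow> 'a \<Rightarrow> 'a \<Rightarrow> 'a \<Rightarrow>
    ('a set \<Rightarrow> ('a set \<times> 'm) set) \<Rightarrow> ('a set \<Rightarrow> ('a set \<times> 'm) set) \<Rightarrow> 'a set \<Rightarrow> ('a set \<times> 'm) set" where
  "star_comp X C x y z \<psi> \<phi> = (\<lambda>W\<in>nbhds X z. SOME c. \<exists>V g U f.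
      V \<in> nbhds X y \<and> (V, g) \<in> \<psi> W \<and> (U, f) \<in> \<phi> V \<and> c = germ X C x W U (cmp C U V W g f))"

definition pre_pseudogroup :: "'a topology \<Rightarrow> ('a, 'm) opcat \<Rightarrow> bool" where
  "pre_pseudogroup X C \<longleftrightarrow>
     t1_space X \<and> cat_over X C \<and>
     (\<forall>V x. openin X V \<and> x \<in> topspace X \<longrightarrow>
        bij_betw (\<lambda>(y, \<phi>). \<phi> V) (SIGMA y:V. Cxy X C x y) (stalk X C x V)) \<and>
     (\<forall>x\<in>topspace X. \<forall>y\<in>topspace X. \<forall>\<phi>\<in>Cxy X C x y. \<exists>\<psi>\<in>Cxy X C y x.
        star_comp X C x y x \<psi> \<phi> = star_id X C x \<and> star_comp X C y x y \<phi> \<psi> = star_id X C y)"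

text \<open>Each presheaf C(-,V) (restriction = precomposition with inclusions) is a sheaf.\<close>
definition hom_sheaves :: "'a topology \<Rightarrow> ('a, 'm) opcat \<Rightarrow> bool" where
  "hom_sheaves X C \<longleftrightarrow>
     (\<forall>V U \<U> s. openin X V \<and> openin X U \<and> (\<forall>W\<in>\<U>. openin X W) \<and> \<Union>\<U> = U \<and>
        (\<forall>W\<in>\<U>. s W \<in> hom C W V) \<and>
        (\<forall>W\<in>\<U>. \<forall>W'\<in>\<U>. cmp C (W \<inter> W') W V (s W) (incl C (W \<inter> W') W) =
                         cmp C (W \<inter> W') W' V (s W') (incl C (W \<inter> W') W'))
      \<longrightarrow> (\<exists>!f. f \<in> hom C U V \<and> (\<forall>W\<in>\<U>. cmp C W U V f (incl C W U) = s W)))"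

definition pseudogroup_sheaf :: "'a topology \<Rightarrow> ('a, 'm) opcat \<Rightarrow> bool" where
  "pseudogroup_sheaf X C \<longleftrightarrow> pre_pseudogroup X C \<and> hom_sheaves X C"

definition local_homeo :: "'a topology \<Rightarrow> 'a set \<Rightarrow> 'a set \<Rightarrow> ('a \<Rightarrow> 'a) \<Rightarrow> bool" where
  "local_homeo X U V f \<longleftrightarrow> f ` U \<subseteq> V \<and>
     (\<forall>x\<in>U. \<exists>W. openin X W \<and> x \<in> W \<and> W \<subseteq> U \<and> openin (subtopology X V) (f ` W) \<and>
        homeomorphic_map (subtopology X W) (subtopology X (f ` W)) f)"

definition homeo_l :: "'a topology \<Rightarrow> ('a, 'a \<Rightarrow> 'a) opcat" where
  "homeo_l X = \<lparr> hom = (\<lambda>U V. {f. openin X U \<and> openin X V \<and> f \<in> extensional U \<and> local_homeo X U V f}),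
                cmp = (\<lambda>U V W g f. compose U g f),
                incl = (\<lambda>U V. restrict id U) \<rparr>"

end

theory Submission
  imports Defs
begin


definition lh_at :: "'a topology \<Rightarrow> ('a \<Rightarrow> 'a) \<Rightarrow> 'a set \<Rightarrow> bool" where
  "lh_at X f W \<longleftrightarrow> openin X W \<and> openin X (f ` W) \<and>
      homeomorphic_map (subtopology X W) (subtopology X (f ` W)) f"

lemma local_homeo_iff:
  assumes "openin X V"
  shows "local_homeo X U V f \<longleftrightarrow> f ` U \<subseteq> V \<and> (\<forall>x\<in>U. \<exists>W. x \<in> W \<and> W \<subseteq> U \<and> lh_at X f W)"
proof
  assume L: "local_homeo X U V f"
  show "f ` U \<subseteq> V \<and> (\<forall>x\<in>U. \<exists>W. x \<in> W \<and> W \<subseteq> U \<and> lh_at X f W)"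
  proof (intro conjI ballI)
    show "f ` U \<subseteq> V" using L by (simp add: local_homeo_def)
    fix x assume "x \<in> U"
    then obtain W where "openin X W" "x \<in> W" "W \<subseteq> U" "openin (subtopology X V) (f ` W)"
        "homeomorphic_map (subtopology X W) (subtopology X (f ` W)) f"
      using L unfolding local_homeo_def by blast
    then show "\<exists>W. x \<in> W \<and> W \<subseteq> U \<and> lh_at X f W"
      using openin_open_subtopology[OF assms] unfolding lh_at_def by blast
  qed
next
  assume R: "f ` U \<subseteq> V \<and> (\<forall>x\<in>U. \<exists>W. x \<in> W \<and> W \<subseteq> U \<and> lh_at X f W)"
  show "local_homeo X U V f"
    unfolding local_homeo_def
  proof (intro conjI ballI)
    show "f ` U \<subseteq> V" using R by simp
    fix x assume "x \<in> U"
    then obtain W where W: "x \<in> W" "W \<subseteq> U" "lh_at X f W" using R by blast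
    have "f ` W \<subseteq> V" using R W(2) by blast
    then show "\<exists>W. openin X W \<and> x \<in> W \<and> W \<subseteq> U \<and> openin (subtopology X V) (f ` W) \<and>
        homeomorphic_map (subtopology X W) (subtopology X (f ` W)) f"
      using W openin_open_subtopology[OF assms] unfolding lh_at_def by blast
  qed
qed

lemma lh_restrict:
  assumes "lh_at X f W" "S \<subseteq> W" "openin X S"
  shows "lh_at X f S"
proof -
  have W: "openin X W" and FW: "openin X (f ` W)" and h: "homeomorphic_map (subtopology X W) (subtopology X (f ` W)) f"
    using assms(1) by (auto simp: lh_at_def)
  have tW: "topspace (subtopology X W) = W" using W openin_subset by (auto simp: topspace_subtopology)
  have tFW: "topspace (subtopology X (f ` W)) = f ` W" using FW openin_subset by (auto simp: topspace_subtopology)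
  have "openin (subtopology X W) S" using assms openin_open_subtopology[OF W] by auto
  then have "openin (subtopology X (f ` W)) (f ` S)"
    using homeomorphic_imp_open_map[OF h] by (simp add: open_map_def)
  then have o: "openin X (f ` S)" using openin_trans_full FW by blast
  have "homeomorphic_map (subtopology (subtopology X W) S) (subtopology (subtopology X (f ` W)) (f ` S)) f"
    by (rule homeomorphic_map_subtopologies[OF h]) (use tW tFW assms(2) in auto)
  moreover have "subtopology (subtopology X W) S = subtopology X S"
    using assms(2) by (simp add: subtopology_subtopology Int_absorb1)
  moreover have "subtopology (subtopology X (f ` W)) (f ` S) = subtopology X (f ` S)"
    using assms(2) by (simp add: subtopology_subtopology Int_absorb1 image_mono)
  ultimately show ?thesis using o assms(3) by (simp add: lh_at_def)
qed

lemma lh_preimage: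
  assumes "lh_at X f W" "openin X T"
  shows "openin X {z \<in> W. f z \<in> T}"
proof -
  have W: "openin X W" and FW: "openin X (f ` W)" and h: "homeomorphic_map (subtopology X W) (subtopology X (f ` W)) f"
    using assms(1) by (auto simp: lh_at_def)
  have c: "continuous_map (subtopology X W) X f"
    using homeomorphic_imp_continuous_map[OF h] continuous_map_from_subtopology continuous_map_in_subtopology by blast
  have "openin (subtopology X W) {z \<in> topspace (subtopology X W). f z \<in> T}"
    by (rule openin_continuous_map_preimage[OF c assms(2)])
  moreover have "topspace (subtopology X W) = W" using W openin_subset by (auto simp: topspace_subtopology)
  ultimately have "openin (subtopology X W) {z \<in> W. f z \<in> T}" by (simp only:)
  then show ?thesis using openin_trans_full W by blast
qed

lemma lh_cong:
  assumes "lh_at X f W" "\<And>z. z \<in> W \<Longrightarrow> f z = g z"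
  shows "lh_at X g W"
proof -
  have e: "g ` W = f ` W" using assms(2) by auto
  have W: "openin X W" using assms(1) by (auto simp: lh_at_def)
  have "topspace (subtopology X W) = W" using W openin_subset by (auto simp: topspace_subtopology)
  then have "homeomorphic_map (subtopology X W) (subtopology X (f ` W)) g"
    using homeomorphic_map_eq[of "subtopology X W" "subtopology X (f ` W)" f g] assms(1,2)
    unfolding lh_at_def by blast
  then show ?thesis using assms(1) e unfolding lh_at_def by simp
qed

lemma lh_comp:
  assumes "lh_at X f W" "lh_at X g (f ` W)"
  shows "lh_at X (g \<circ> f) W"
proof -
  have "homeomorphic_map (subtopology X W) (subtopology X (g ` f ` W)) (g \<circ> f)"
    using assms homeomorphic_map_compose unfolding lh_at_def by blast
  then show ?thesis using assms unfolding lh_at_def by (simp add: image_comp)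
qed

lemma lh_id:
  assumes "openin X W" shows "lh_at X id W"
  using assms by (simp add: lh_at_def)

lemma lh_inv:
  assumes "lh_at X f W"
  obtains g where "lh_at X g (f ` W)" "g ` (f ` W) = W" "\<And>z. z \<in> W \<Longrightarrow> g (f z) = z"
     "\<And>w. w \<in> f ` W \<Longrightarrow> f (g w) = w"
proof -
  have W: "openin X W" and FW: "openin X (f ` W)" and h: "homeomorphic_map (subtopology X W) (subtopology X (f ` W)) f"
    using assms(1) by (auto simp: lh_at_def)
  have tW: "topspace (subtopology X W) = W" using W openin_subset by (auto simp: topspace_subtopology)
  have tFW: "topspace (subtopology X (f ` W)) = f ` W" using FW openin_subset by (auto simp: topspace_subtopology)
  obtain g where hm: "homeomorphic_maps (subtopology X W) (subtopology X (f ` W)) f g"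
    using h homeomorphic_map_maps by blast
  have hm2: "homeomorphic_map (subtopology X W) (subtopology X (f ` W)) f \<and>
        homeomorphic_map (subtopology X (f ` W)) (subtopology X W) g \<and>
        (\<forall>x \<in> topspace (subtopology X W). g(f x) = x) \<and> (\<forall>y \<in> topspace (subtopology X (f ` W)). f(g y) = y)"
    by (rule homeomorphic_maps_map[THEN iffD1, OF hm])
  note c2 = hm2[THEN conjunct2]
  note hg = c2[THEN conjunct1]
  note c3 = c2[THEN conjunct2]
  have i1: "\<And>z. z \<in> W \<Longrightarrow> g (f z) = z" using c3[THEN conjunct1] unfolding tW by blast
  have i2: "\<And>w. w \<in> f ` W \<Longrightarrow> f (g w) = w" using c3[THEN conjunct2] unfolding tFW by blast
  have im: "g ` (f ` W) = W"
  proof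
    show "g ` f ` W \<subseteq> W" using i1 by auto
    show "W \<subseteq> g ` f ` W"
    proof
      fix z assume "z \<in> W" then have "z = g (f z)" using i1 by simp
      then show "z \<in> g ` f ` W" using \<open>z \<in> W\<close> by blast
    qed
  qed
  have "lh_at X g (f ` W)" unfolding lh_at_def using FW W hg im by simp
  then show ?thesis using that im i1 i2 by blast
qed



lemma hom_H: "f \<in> hom (homeo_l X) U V \<longleftrightarrow> openin X U \<and> openin X V \<and> f \<in> extensional U \<and> local_homeo X U V f"
  by (simp add: homeo_l_def)
lemma cmp_H: "cmp (homeo_l X) U V W g f = compose U g f" by (simp add: homeo_l_def)
lemma incl_H: "incl (homeo_l X) U V = restrict id U" by (simp add: homeo_l_def)

lemma hom_lh:
  assumes "f \<in> hom (homeo_l X) U V" "x \<in> U"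
  obtains W where "x \<in> W" "W \<subseteq> U" "lh_at X f W"
  using assms local_homeo_iff unfolding hom_H by metis

lemma hom_img: "f \<in> hom (homeo_l X) U V \<Longrightarrow> f ` U \<subseteq> V"
  unfolding hom_H local_homeo_def by blast

lemma hom_restrict:
  assumes f: "f \<in> hom (homeo_l X) U V" and U': "openin X U'" "U' \<subseteq> U" and V': "openin X V'" "f ` U' \<subseteq> V'"
  shows "restrict f U' \<in> hom (homeo_l X) U' V'"
proof -
  have "local_homeo X U' V' (restrict f U')"
    unfolding local_homeo_iff[OF V'(1)]
  proof (intro conjI ballI)
    show "restrict f U' ` U' \<subseteq> V'" using V'(2) by auto
    fix x assume x: "x \<in> U'"
    obtain W where W: "x \<in> W" "W \<subseteq> U" "lh_at X f W" using hom_lh[OF f] x U'(2) by blast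
    have "openin X W" using W(3) by (simp add: lh_at_def)
    then have o: "openin X (W \<inter> U')" using U'(1) by blast
    have "lh_at X f (W \<inter> U')" by (rule lh_restrict[OF W(3) _ o]) auto
    then have "lh_at X (restrict f U') (W \<inter> U')" by (rule lh_cong) auto
    then show "\<exists>W. x \<in> W \<and> W \<subseteq> U' \<and> lh_at X (restrict f U') W" using W(1) x by blast
  qed
  then show ?thesis using U' V' unfolding hom_H by simp
qed

lemma hom_cong:
  assumes f: "f \<in> hom (homeo_l X) U V" and "\<And>z. z \<in> U \<Longrightarrow> f z = g z" and "g \<in> extensional U"
  shows "g \<in> hom (homeo_l X) U V"
proof -
  have "g = restrict f U" using assms(2,3) unfolding extensional_def by (auto simp: fun_eq_iff)
  moreover have "restrict f U \<in> hom (homeo_l X) U V"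
    using hom_restrict[OF f] f hom_img[OF f] unfolding hom_H by blast
  ultimately show ?thesis by simp
qed

lemma hom_enlarge:
  assumes f: "f \<in> hom (homeo_l X) U V" and "V \<subseteq> V'" "openin X V'"
  shows "f \<in> hom (homeo_l X) U V'"
proof -
  have "restrict f U \<in> hom (homeo_l X) U V'"
    using hom_restrict[OF f] f hom_img[OF f] assms unfolding hom_H by blast
  moreover have "restrict f U = f" using f unfolding hom_H by (simp add: extensional_restrict)
  ultimately show ?thesis by simp
qed

lemma hom_cont:
  assumes f: "f \<in> hom (homeo_l X) U V" and x: "x \<in> U" and T: "openin X T" "f x \<in> T"
  obtains D where "openin X D" "x \<in> D" "D \<subseteq> U" "f ` D \<subseteq> T"
proof -
  obtain W where W: "x \<in> W" "W \<subseteq> U" "lh_at X f W" using hom_lh[OF f x] by blast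
  have "openin X {z \<in> W. f z \<in> T}" by (rule lh_preimage[OF W(3) T(1)])
  then show ?thesis using that W T by blast
qed

lemma hom_incl:
  assumes "openin X U" "openin X V" "U \<subseteq> V"
  shows "restrict id U \<in> hom (homeo_l X) U V"
proof -
  have "local_homeo X U V (restrict id U)"
    unfolding local_homeo_iff[OF assms(2)]
  proof (intro conjI ballI)
    show "restrict id U ` U \<subseteq> V" using assms(3) by auto
    fix x assume "x \<in> U"
    have "lh_at X (restrict id U) U" by (rule lh_cong[OF lh_id[OF assms(1)]]) auto
    then show "\<exists>W. x \<in> W \<and> W \<subseteq> U \<and> lh_at X (restrict id U) W" using \<open>x \<in> U\<close> by blast
  qed
  then show ?thesis using assms unfolding hom_H by simp
qed

lemma hom_comp:
  assumes f: "f \<in> hom (homeo_l X) U V" and g: "g \<in> hom (homeo_l X) V W"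
  shows "compose U g f \<in> hom (homeo_l X) U W"
proof -
  have U: "openin X U" and Wo: "openin X W" using f g unfolding hom_H by auto
  have "local_homeo X U W (compose U g f)"
    unfolding local_homeo_iff[OF Wo]
  proof (intro conjI ballI)
    show "compose U g f ` U \<subseteq> W" using hom_img[OF f] hom_img[OF g] by (auto simp: compose_def)
    fix x assume x: "x \<in> U"
    obtain W1 where W1: "x \<in> W1" "W1 \<subseteq> U" "lh_at X f W1" using hom_lh[OF f x] by blast
    have fx: "f x \<in> V" using hom_img[OF f] x by blast
    obtain W2 where W2: "f x \<in> W2" "W2 \<subseteq> V" "lh_at X g W2" using hom_lh[OF g fx] by blast
    define S where "S = {z \<in> W1. f z \<in> W2}"
    have So: "openin X S" unfolding S_def by (rule lh_preimage[OF W1(3)]) (use W2(3) in \<open>simp add: lh_at_def\<close>)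
    have lf: "lh_at X f S" by (rule lh_restrict[OF W1(3) _ So]) (auto simp: S_def)
    have fS: "openin X (f ` S)" using lf by (simp add: lh_at_def)
    have lg: "lh_at X g (f ` S)" by (rule lh_restrict[OF W2(3) _ fS]) (auto simp: S_def)
    have "lh_at X (g \<circ> f) S" by (rule lh_comp[OF lf lg])
    then have "lh_at X (compose U g f) S" by (rule lh_cong) (use W1(2) in \<open>auto simp: S_def compose_def\<close>)
    moreover have "x \<in> S" "S \<subseteq> U" using x W1 W2 by (auto simp: S_def)
    ultimately show "\<exists>Wa. x \<in> Wa \<and> Wa \<subseteq> U \<and> lh_at X (compose U g f) Wa" by blast
  qed
  then show ?thesis using U Wo unfolding hom_H by (simp add: compose_def)
qed

lemma hom_local_inverse:
  assumes f: "f \<in> hom (homeo_l X) U V" and x: "x \<in> U"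
  obtains W g where "x \<in> W" "W \<subseteq> U" "openin X W" "openin X (f ` W)"
    "g \<in> hom (homeo_l X) (f ` W) W" "\<And>z. z \<in> W \<Longrightarrow> g (f z) = z" "\<And>w. w \<in> f ` W \<Longrightarrow> f (g w) = w"
proof -
  obtain W where W: "x \<in> W" "W \<subseteq> U" "lh_at X f W" using hom_lh[OF f x] by blast
  obtain g where g: "lh_at X g (f ` W)" "g ` (f ` W) = W" "\<And>z. z \<in> W \<Longrightarrow> g (f z) = z"
     "\<And>w. w \<in> f ` W \<Longrightarrow> f (g w) = w" using lh_inv[OF W(3)] by blast
  have Wo: "openin X W" and FW: "openin X (f ` W)" using W(3) by (auto simp: lh_at_def)
  have lg: "lh_at X (restrict g (f ` W)) (f ` W)" by (rule lh_cong[OF g(1)]) auto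
  have "local_homeo X (f ` W) W (restrict g (f ` W))"
    unfolding local_homeo_iff[OF Wo] using lg g(2) by auto
  then have "restrict g (f ` W) \<in> hom (homeo_l X) (f ` W) W" using Wo FW unfolding hom_H by simp
  then show ?thesis using that W Wo FW g(3,4) by (metis (no_types, lifting) image_eqI restrict_apply')
qed

lemma cat_over_H: "cat_over X (homeo_l X)"
  unfolding cat_over_def
proof (intro conjI allI impI)
  fix U V f assume "f \<in> hom (homeo_l X) U V"
  then show "openin X U" "openin X V" unfolding hom_H by auto
next
  fix U V W f g assume "f \<in> hom (homeo_l X) U V" "g \<in> hom (homeo_l X) V W"
  then show "cmp (homeo_l X) U V W g f \<in> hom (homeo_l X) U W" unfolding cmp_H by (rule hom_comp)
next
  fix U V W Z f g h assume f: "f \<in> hom (homeo_l X) U V" and "g \<in> hom (homeo_l X) V W" "h \<in> hom (homeo_l X) W Z"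
  show "cmp (homeo_l X) U W Z h (cmp (homeo_l X) U V W g f) = cmp (homeo_l X) U V Z (cmp (homeo_l X) V W Z h g) f"
    unfolding cmp_H using hom_img[OF f] by (auto simp: compose_def fun_eq_iff)
next
  fix U V f assume f: "f \<in> hom (homeo_l X) U V"
  have e: "f \<in> extensional U" using f unfolding hom_H by simp
  show "cmp (homeo_l X) U U V f (incl (homeo_l X) U U) = f"
    unfolding cmp_H incl_H using e by (auto simp: compose_def fun_eq_iff extensional_def)
  show "cmp (homeo_l X) U V V (incl (homeo_l X) V V) f = f"
    unfolding cmp_H incl_H using e hom_img[OF f] by (auto simp: compose_def fun_eq_iff extensional_def)
next
  fix U V assume "openin X U \<and> openin X V \<and> U \<subseteq> V"
  then show "incl (homeo_l X) U V \<in> hom (homeo_l X) U V" unfolding incl_H using hom_incl by blast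
next
  fix U V W assume "openin X U \<and> openin X V \<and> openin X W \<and> U \<subseteq> V \<and> V \<subseteq> W"
  then show "cmp (homeo_l X) U V W (incl (homeo_l X) V W) (incl (homeo_l X) U V) = incl (homeo_l X) U W"
    unfolding cmp_H incl_H by (auto simp: compose_def fun_eq_iff)
qed



definition agree :: "'a topology \<Rightarrow> 'a \<Rightarrow> ('a \<Rightarrow> 'a) \<Rightarrow> ('a \<Rightarrow> 'a) \<Rightarrow> bool" where
  "agree X x f g \<longleftrightarrow> (\<exists>W. openin X W \<and> x \<in> W \<and> (\<forall>z\<in>W. f z = g z))"

definition G :: "'a topology \<Rightarrow> 'a \<Rightarrow> 'a set \<Rightarrow> ('a \<Rightarrow> 'a) \<Rightarrow> ('a set \<times> ('a \<Rightarrow> 'a)) set" where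
  "G X x V f = {(U', f'). (U', f') \<in> germ_dom X (homeo_l X) x V \<and> agree X x f f'}"

definition Phi :: "'a topology \<Rightarrow> 'a \<Rightarrow> ('a \<Rightarrow> 'a) \<Rightarrow> 'a set \<Rightarrow> ('a set \<times> ('a \<Rightarrow> 'a)) set" where
  "Phi X x f = (\<lambda>V'\<in>nbhds X (f x). G X x V' f)"

lemma agree_sym: "agree X x f g \<Longrightarrow> agree X x g f"
  unfolding agree_def by metis

lemma agree_trans: "agree X x f g \<Longrightarrow> agree X x g h \<Longrightarrow> agree X x f h"
  unfolding agree_def
proof -
  assume "\<exists>W. openin X W \<and> x \<in> W \<and> (\<forall>z\<in>W. f z = g z)" "\<exists>W. openin X W \<and> x \<in> W \<and> (\<forall>z\<in>W. g z = h z)"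
  then obtain W1 W2 where "openin X W1" "x \<in> W1" "\<forall>z\<in>W1. f z = g z" "openin X W2" "x \<in> W2" "\<forall>z\<in>W2. g z = h z" by blast
  then show "\<exists>W. openin X W \<and> x \<in> W \<and> (\<forall>z\<in>W. f z = h z)"
    by (intro exI[of _ "W1 \<inter> W2"]) auto
qed

lemma dom_H: "(U, f) \<in> germ_dom X (homeo_l X) x V \<longleftrightarrow> openin X U \<and> x \<in> U \<and> f \<in> hom (homeo_l X) U V"
  by (simp add: germ_dom_def)

lemma restrict_cmp_incl: "cmp (homeo_l X) W U V f (incl (homeo_l X) W U) = restrict f W"
  unfolding cmp_H incl_H compose_def by (auto simp: fun_eq_iff)

lemma germ_rel_H:
  "((U, f), (U', f')) \<in> germ_rel X (homeo_l X) x V \<longleftrightarrow>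
     (U, f) \<in> germ_dom X (homeo_l X) x V \<and> (U', f') \<in> germ_dom X (homeo_l X) x V \<and> agree X x f f'"
proof
  assume "((U, f), (U', f')) \<in> germ_rel X (homeo_l X) x V"
  then have d: "(U, f) \<in> germ_dom X (homeo_l X) x V" "(U', f') \<in> germ_dom X (homeo_l X) x V"
    and "\<exists>W. openin X W \<and> x \<in> W \<and> W \<subseteq> U \<inter> U' \<and> restrict f W = restrict f' W"
    unfolding germ_rel_def restrict_cmp_incl by auto
  then obtain W where "openin X W" "x \<in> W" "restrict f W = restrict f' W" by blast
  then have "agree X x f f'" unfolding agree_def
    by (intro exI[of _ W]) (metis restrict_apply')
  then show "(U, f) \<in> germ_dom X (homeo_l X) x V \<and> (U', f') \<in> germ_dom X (homeo_l X) x V \<and> agree X x f f'"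
    using d by blast
next
  assume a: "(U, f) \<in> germ_dom X (homeo_l X) x V \<and> (U', f') \<in> germ_dom X (homeo_l X) x V \<and> agree X x f f'"
  then obtain W where W: "openin X W" "x \<in> W" "\<forall>z\<in>W. f z = f' z" unfolding agree_def by blast
  have U: "openin X U" "x \<in> U" "openin X U'" "x \<in> U'" using a unfolding dom_H by auto
  have "openin X (W \<inter> U \<inter> U')" using W U by blast
  moreover have "restrict f (W \<inter> U \<inter> U') = restrict f' (W \<inter> U \<inter> U')" using W(3) by (auto simp: fun_eq_iff)
  ultimately show "((U, f), (U', f')) \<in> germ_rel X (homeo_l X) x V"
    using a W U unfolding germ_rel_def restrict_cmp_incl
    by (intro CollectI case_prodI conjI exI[of _ "W \<inter> U \<inter> U'"]) auto
qed

lemma germ_H: "(U, f) \<in> germ_dom X (homeo_l X) x V \<Longrightarrow> germ X (homeo_l X) x V U f = G X x V f"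
proof -
  assume d: "(U, f) \<in> germ_dom X (homeo_l X) x V"
  show ?thesis
  proof (rule set_eqI)
    fix p :: "'a set \<times> ('a \<Rightarrow> 'a)"
    obtain U' f' where p: "p = (U', f')" by (cases p)
    show "p \<in> germ X (homeo_l X) x V U f \<longleftrightarrow> p \<in> G X x V f"
      unfolding p germ_def G_def Image_singleton_iff germ_rel_H using d by simp
  qed
qed

lemma G_cong: "agree X x f f' \<Longrightarrow> G X x V f = G X x V f'"
proof -
  assume a: "agree X x f f'"
  have "agree X x f g \<longleftrightarrow> agree X x f' g" for g
    using agree_trans[OF a, of g] agree_trans[OF agree_sym[OF a], of g] by blast
  then show ?thesis unfolding G_def by simp
qed

lemma G_mem: "(U', f') \<in> G X x V f \<longleftrightarrow> openin X U' \<and> x \<in> U' \<and> f' \<in> hom (homeo_l X) U' V \<and> agree X x f f'"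
  by (simp only: G_def mem_Collect_eq case_prod_conv dom_H conj_assoc)

lemma agree_refl: "x \<in> U \<Longrightarrow> openin X U \<Longrightarrow> agree X x f f"
  unfolding agree_def by (intro exI[of _ U] conjI ballI refl)

lemma G_self: "(U, f) \<in> germ_dom X (homeo_l X) x V \<Longrightarrow> (U, f) \<in> G X x V f"
proof -
  assume "(U, f) \<in> germ_dom X (homeo_l X) x V"
  then have d: "openin X U" "x \<in> U" "f \<in> hom (homeo_l X) U V" unfolding dom_H by auto
  show ?thesis unfolding G_mem using d agree_refl[OF d(2,1)] by (intro conjI)
qed

lemma stalk_H: "c \<in> stalk X (homeo_l X) x V \<longleftrightarrow> (\<exists>U f. (U, f) \<in> germ_dom X (homeo_l X) x V \<and> c = G X x V f)"
proof
  assume "c \<in> stalk X (homeo_l X) x V"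
  then obtain p where p: "p \<in> germ_dom X (homeo_l X) x V" "c = germ_rel X (homeo_l X) x V `` {p}"
    unfolding stalk_def quotient_def by blast
  obtain U f where "p = (U, f)" by (cases p)
  then show "\<exists>U f. (U, f) \<in> germ_dom X (homeo_l X) x V \<and> c = G X x V f"
    using p germ_H[of U f X x V] unfolding germ_def by auto
next
  assume "\<exists>U f. (U, f) \<in> germ_dom X (homeo_l X) x V \<and> c = G X x V f"
  then obtain U f where p: "(U, f) \<in> germ_dom X (homeo_l X) x V" "c = G X x V f" by blast
  then have "c = germ_rel X (homeo_l X) x V `` {(U, f)}" using germ_H[of U f X x V] unfolding germ_def by simp
  then show "c \<in> stalk X (homeo_l X) x V" unfolding stalk_def quotient_def using p(1) by blast
qed

lemma stalk_ne:
  assumes "c \<in> stalk X (homeo_l X) x V"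
  obtains U f where "(U, f) \<in> c" "(U, f) \<in> germ_dom X (homeo_l X) x V" "c = G X x V f"
proof -
  obtain U f where "(U, f) \<in> germ_dom X (homeo_l X) x V" "c = G X x V f" using assms unfolding stalk_H by blast
  then show ?thesis using that G_self[of U f X x V] by simp
qed

lemma cmp_incl_left:
  assumes "f \<in> hom (homeo_l X) U V"
  shows "cmp (homeo_l X) U V V' (incl (homeo_l X) V V') f = f"
proof -
  have e: "f \<in> extensional U" using assms unfolding hom_H by simp
  show ?thesis unfolding cmp_H incl_H using e hom_img[OF assms] by (auto simp: compose_def fun_eq_iff extensional_def)
qed

lemma exists_rep:
  assumes d: "(U, f) \<in> germ_dom X (homeo_l X) x V0" and V': "openin X V'" "f x \<in> V'"
  obtains U' f' where "(U', f') \<in> germ_dom X (homeo_l X) x V'" "agree X x f f'"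
proof -
  have f: "f \<in> hom (homeo_l X) U V0" and x: "x \<in> U" using d unfolding dom_H by auto
  obtain D where D: "openin X D" "x \<in> D" "D \<subseteq> U" "f ` D \<subseteq> V'" using hom_cont[OF f x V'] by blast
  have "restrict f D \<in> hom (homeo_l X) D V'" by (rule hom_restrict[OF f D(1,3) V'(1) D(4)])
  moreover have "agree X x f (restrict f D)" unfolding agree_def using D by auto
  ultimately show ?thesis using that D unfolding dom_H by blast
qed

lemma Phi_in:
  assumes d: "(U, f) \<in> germ_dom X (homeo_l X) x V0"
  shows "Phi X x f \<in> Cxy X (homeo_l X) x (f x)"
  unfolding Cxy_def
proof (intro CollectI conjI allI impI ballI)
  show "Phi X x f \<in> (\<Pi>\<^sub>E V\<in>nbhds X (f x). stalk X (homeo_l X) x V)"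
  proof (rule PiE_I)
    fix V' assume "V' \<in> nbhds X (f x)"
    then have V': "openin X V'" "f x \<in> V'" by (auto simp: nbhds_def)
    obtain U' f' where u: "(U', f') \<in> germ_dom X (homeo_l X) x V'" "agree X x f f'"
      using exists_rep[OF d V'] by blast
    have "Phi X x f V' = G X x V' f'" using \<open>V' \<in> nbhds X (f x)\<close> G_cong[OF u(2)] by (simp add: Phi_def)
    then show "Phi X x f V' \<in> stalk X (homeo_l X) x V'"
      unfolding stalk_H using u(1) by blast
  next
    fix V' assume "V' \<notin> nbhds X (f x)" then show "Phi X x f V' = undefined" by (simp add: Phi_def)
  qed
next
  fix V V' p assume VV: "V \<in> nbhds X (f x) \<and> V' \<in> nbhds X (f x) \<and> V \<subseteq> V'" and p: "p \<in> Phi X x f V"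
  obtain U1 f1 where p1: "p = (U1, f1)" by (cases p)
  have "(U1, f1) \<in> G X x V f" using p p1 VV by (simp add: Phi_def)
  then have U1: "openin X U1" "x \<in> U1" "f1 \<in> hom (homeo_l X) U1 V" "agree X x f f1" unfolding G_mem by auto
  have f1': "f1 \<in> hom (homeo_l X) U1 V'" by (rule hom_enlarge[OF U1(3)]) (use VV in \<open>auto simp: nbhds_def\<close>)
  have "germ X (homeo_l X) x V' U1 (cmp (homeo_l X) U1 V V' (incl (homeo_l X) V V') f1) = G X x V' f1"
    unfolding cmp_incl_left[OF U1(3)] by (rule germ_H) (use U1 f1' in \<open>simp add: dom_H\<close>)
  also have "\<dots> = G X x V' f" using G_cong[OF agree_sym[OF U1(4)]] by simp
  also have "\<dots> = Phi X x f V'" using VV by (simp add: Phi_def)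
  finally show "case p of (U, fa) \<Rightarrow> germ X (homeo_l X) x V' U (cmp (homeo_l X) U V V' (incl (homeo_l X) V V') fa) = Phi X x f V'"
    using p1 by simp
qed

lemma Cxy_char:
  assumes T1: "t1_space X" and phi: "\<phi> \<in> Cxy X (homeo_l X) x y" and V: "V \<in> nbhds X y" and p: "(U, f) \<in> \<phi> V"
  shows "f x = y" "\<phi> = Phi X x f"
proof -
  have PE: "\<phi> \<in> (\<Pi>\<^sub>E V\<in>nbhds X y. stalk X (homeo_l X) x V)" using phi by (simp add: Cxy_def)
  have comp: "\<And>V V' U f. V \<in> nbhds X y \<Longrightarrow> V' \<in> nbhds X y \<Longrightarrow> V \<subseteq> V' \<Longrightarrow> (U, f) \<in> \<phi> V \<Longrightarrow>
      germ X (homeo_l X) x V' U (cmp (homeo_l X) U V V' (incl (homeo_l X) V V') f) = \<phi> V'"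
    using phi unfolding Cxy_def by fast
  have key: "f x \<in> V' \<and> \<phi> V' = G X x V' f" if V': "V' \<in> nbhds X y" for V'
  proof -
    have V'': "V \<inter> V' \<in> nbhds X y" using V V' by (auto simp: nbhds_def)
    have "\<phi> (V \<inter> V') \<in> stalk X (homeo_l X) x (V \<inter> V')" using PE V'' by blast
    then obtain U'' f'' where m: "(U'', f'') \<in> \<phi> (V \<inter> V')" and d: "(U'', f'') \<in> germ_dom X (homeo_l X) x (V \<inter> V')"
      by (rule stalk_ne) auto
    have f'': "f'' \<in> hom (homeo_l X) U'' (V \<inter> V')" "x \<in> U''" using d by (auto simp: dom_H)
    have e: "\<phi> W = G X x W f''" if W: "W \<in> nbhds X y" "V \<inter> V' \<subseteq> W" for W
    proof -
      have fW: "f'' \<in> hom (homeo_l X) U'' W" by (rule hom_enlarge[OF f''(1) W(2)]) (use W in \<open>simp add: nbhds_def\<close>)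
      have "\<phi> W = germ X (homeo_l X) x W U'' (cmp (homeo_l X) U'' (V \<inter> V') W (incl (homeo_l X) (V \<inter> V') W) f'')"
        using comp[OF V'' W m] by simp
      also have "\<dots> = G X x W f''" unfolding cmp_incl_left[OF f''(1)]
        by (rule germ_H) (use fW d in \<open>simp add: dom_H\<close>)
      finally show ?thesis .
    qed
    have "(U, f) \<in> G X x V f''" using e[OF V] p by auto
    then have ag: "agree X x f'' f" unfolding G_mem by simp
    then have "f x = f'' x" unfolding agree_def by force
    moreover have "f'' x \<in> V \<inter> V'" using hom_img[OF f''(1)] f''(2) by blast
    moreover have "\<phi> V' = G X x V' f" using e[OF V'] G_cong[OF ag] by simp
    ultimately show ?thesis by simp
  qed
  have yt: "y \<in> topspace X" using V openin_subset by (force simp: nbhds_def)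
  have ft: "f x \<in> topspace X" using key[OF V] V openin_subset by (force simp: nbhds_def)
  show fx: "f x = y"
  proof (rule ccontr)
    assume "f x \<noteq> y"
    then obtain W where "openin X W" "y \<in> W" "f x \<notin> W" using T1 yt ft unfolding t1_space_def by metis
    then show False using key[of W] by (simp add: nbhds_def)
  qed
  show "\<phi> = Phi X x f"
  proof (rule ext)
    fix W show "\<phi> W = Phi X x f W"
    proof (cases "W \<in> nbhds X y")
      case True then show ?thesis using key fx by (simp add: Phi_def)
    next
      case False then show ?thesis using PE fx by (simp add: Phi_def PiE_def extensional_def)
    qed
  qed
qed



lemma bij_part:
  assumes T1: "t1_space X" and V: "openin X V" and x: "x \<in> topspace X"
  shows "bij_betw (\<lambda>(y, \<phi>). \<phi> V) (SIGMA y:V. Cxy X (homeo_l X) x y) (stalk X (homeo_l X) x V)"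
  unfolding bij_betw_def
proof (intro conjI)
  show "inj_on (\<lambda>(y, \<phi>). \<phi> V) (SIGMA y:V. Cxy X (homeo_l X) x y)"
  proof (rule inj_onI)
    fix a b assume a: "a \<in> (SIGMA y:V. Cxy X (homeo_l X) x y)" and b: "b \<in> (SIGMA y:V. Cxy X (homeo_l X) x y)"
      and e: "(case a of (y, \<phi>) \<Rightarrow> \<phi> V) = (case b of (y, \<phi>) \<Rightarrow> \<phi> V)"
    obtain y \<phi> where a1: "a = (y, \<phi>)" by (cases a)
    obtain y' \<phi>' where b1: "b = (y', \<phi>')" by (cases b)
    have yV: "y \<in> V" and phi: "\<phi> \<in> Cxy X (homeo_l X) x y" using a a1 by auto
    have yV': "y' \<in> V" and phi': "\<phi>' \<in> Cxy X (homeo_l X) x y'" using b b1 by auto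
    have Vn: "V \<in> nbhds X y" "V \<in> nbhds X y'" using V yV yV' by (auto simp: nbhds_def)
    have "\<phi> V \<in> stalk X (homeo_l X) x V" using phi Vn(1) unfolding Cxy_def PiE_def Pi_def by blast
    then obtain U f where m: "(U, f) \<in> \<phi> V" by (rule stalk_ne)
    have m': "(U, f) \<in> \<phi>' V" using m e a1 b1 by simp
    have "f x = y" "\<phi> = Phi X x f" using Cxy_char[OF T1 phi Vn(1) m] by auto
    moreover have "f x = y'" "\<phi>' = Phi X x f" using Cxy_char[OF T1 phi' Vn(2) m'] by auto
    ultimately show "a = b" using a1 b1 by simp
  qed
next
  show "(\<lambda>(y, \<phi>). \<phi> V) ` (SIGMA y:V. Cxy X (homeo_l X) x y) = stalk X (homeo_l X) x V"
  proof
    show "(\<lambda>(y, \<phi>). \<phi> V) ` (SIGMA y:V. Cxy X (homeo_l X) x y) \<subseteq> stalk X (homeo_l X) x V"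
    proof
      fix c assume "c \<in> (\<lambda>(y, \<phi>). \<phi> V) ` (SIGMA y:V. Cxy X (homeo_l X) x y)"
      then obtain y \<phi> where "y \<in> V" "\<phi> \<in> Cxy X (homeo_l X) x y" "c = \<phi> V" by blast
      moreover have "V \<in> nbhds X y" using V \<open>y \<in> V\<close> by (auto simp: nbhds_def)
      ultimately show "c \<in> stalk X (homeo_l X) x V" unfolding Cxy_def PiE_def Pi_def by blast
    qed
    show "stalk X (homeo_l X) x V \<subseteq> (\<lambda>(y, \<phi>). \<phi> V) ` (SIGMA y:V. Cxy X (homeo_l X) x y)"
    proof
      fix c assume "c \<in> stalk X (homeo_l X) x V"
      then obtain U f where d: "(U, f) \<in> germ_dom X (homeo_l X) x V" and c: "c = G X x V f"
        unfolding stalk_H by blast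
      have fx: "f x \<in> V" using d hom_img unfolding dom_H by blast
      have P: "Phi X x f \<in> Cxy X (homeo_l X) x (f x)" by (rule Phi_in[OF d])
      have "Phi X x f V = c" using c fx V by (simp add: Phi_def nbhds_def)
      then show "c \<in> (\<lambda>(y, \<phi>). \<phi> V) ` (SIGMA y:V. Cxy X (homeo_l X) x y)"
        using P fx by (intro image_eqI[of _ _ "(f x, Phi X x f)"]) auto
    qed
  qed
qed

lemma comp_id:
  assumes x: "x \<in> topspace X"
    and d: "(U, f) \<in> germ_dom X (homeo_l X) x V0"
    and d2: "(U2, g) \<in> germ_dom X (homeo_l X) (f x) V1"
    and gf: "g (f x) = x" and ag: "agree X x (\<lambda>z. g (f z)) id"
  shows "star_comp X (homeo_l X) x (f x) x (Phi X (f x) g) (Phi X x f) = star_id X (homeo_l X) x"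
proof (rule ext)
  fix W'
  show "star_comp X (homeo_l X) x (f x) x (Phi X (f x) g) (Phi X x f) W' = star_id X (homeo_l X) x W'"
  proof (cases "W' \<in> nbhds X x")
    case False then show ?thesis by (simp add: star_comp_def star_id_def)
  next
    case True
    then have W': "openin X W'" "x \<in> W'" by (auto simp: nbhds_def)
    have iW: "restrict id W' \<in> hom (homeo_l X) W' W'" using hom_incl[OF W'(1) W'(1)] by simp
    have sid: "star_id X (homeo_l X) x W' = G X x W' (restrict id W')"
      using True germ_H[of W' "restrict id W'" X x W'] iW W' unfolding star_id_def incl_H dom_H by simp
    have psi: "Phi X (f x) g W' = G X (f x) W' g" using True gf by (simp add: Phi_def)
    define P where "P c \<longleftrightarrow> (\<exists>V g' U' f'. V \<in> nbhds X (f x) \<and> (V, g') \<in> Phi X (f x) g W' \<and>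
         (U', f') \<in> Phi X x f V \<and> c = germ X (homeo_l X) x W' U' (cmp (homeo_l X) U' V W' g' f'))" for c
    have sc: "star_comp X (homeo_l X) x (f x) x (Phi X (f x) g) (Phi X x f) W' = (SOME c. P c)"
      using True unfolding star_comp_def P_def by simp
    have uniq: "c = G X x W' (restrict id W')" if "P c" for c
    proof -
      obtain V g' U' f' where V: "V \<in> nbhds X (f x)" and vg: "(V, g') \<in> G X (f x) W' g"
        and uf: "(U', f') \<in> Phi X x f V" and c: "c = germ X (homeo_l X) x W' U' (cmp (homeo_l X) U' V W' g' f')"
        using \<open>P c\<close> psi unfolding P_def by auto
      have uf': "(U', f') \<in> G X x V f" using uf V by (simp add: Phi_def)
      have g': "g' \<in> hom (homeo_l X) V W'" "agree X (f x) g g'" using vg unfolding G_mem by auto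
      have f': "openin X U'" "x \<in> U'" "f' \<in> hom (homeo_l X) U' V" "agree X x f f'" using uf' unfolding G_mem by auto
      have cm: "compose U' g' f' \<in> hom (homeo_l X) U' W'" by (rule hom_comp[OF f'(3) g'(1)])
      have c2: "c = G X x W' (compose U' g' f')" unfolding c cmp_H
        by (rule germ_H) (use cm f' in \<open>simp add: dom_H\<close>)
      obtain A where A: "openin X A" "f x \<in> A" "\<forall>z\<in>A. g z = g' z" using g'(2) unfolding agree_def by blast
      obtain B where B: "openin X B" "x \<in> B" "\<forall>z\<in>B. f z = f' z" using f'(4) unfolding agree_def by blast
      obtain C where C: "openin X C" "x \<in> C" "\<forall>z\<in>C. g (f z) = id z" using ag unfolding agree_def by blast
      have f'x: "f' x \<in> A" using A B by simp
      obtain D where D: "openin X D" "x \<in> D" "D \<subseteq> U'" "f' ` D \<subseteq> A" using hom_cont[OF f'(3) f'(2) A(1) f'x] by blast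
      have "agree X x (compose U' g' f') (restrict id W')" unfolding agree_def
      proof (intro exI[of _ "D \<inter> B \<inter> C \<inter> W'"] conjI ballI)
        show "openin X (D \<inter> B \<inter> C \<inter> W')" using D B C W' by blast
        show "x \<in> D \<inter> B \<inter> C \<inter> W'" using D B C W' by blast
        fix z assume z: "z \<in> D \<inter> B \<inter> C \<inter> W'"
        then have "f' z \<in> A" using D by blast
        then have "compose U' g' f' z = g (f' z)" using z D A by (auto simp: compose_def)
        also have "\<dots> = g (f z)" using z B by simp
        also have "\<dots> = z" using z C by simp
        finally show "compose U' g' f' z = restrict id W' z" using z by simp
      qed
      then show ?thesis using c2 G_cong by simp
    qed
    have ex: "\<exists>c. P c"
    proof -
      have fxW: "g (f x) \<in> W'" using gf W' by simp
      obtain V g' where vg: "(V, g') \<in> germ_dom X (homeo_l X) (f x) W'" "agree X (f x) g g'"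
        using exists_rep[OF d2 W'(1) fxW] by blast
      have V: "V \<in> nbhds X (f x)" using vg unfolding dom_H nbhds_def by auto
      have vgG: "(V, g') \<in> Phi X (f x) g W'" unfolding psi G_mem using vg unfolding dom_H by auto
      have fxV: "f x \<in> V" using V by (simp add: nbhds_def)
      obtain U' f' where uf: "(U', f') \<in> germ_dom X (homeo_l X) x V" "agree X x f f'"
        using exists_rep[OF d _ fxV] V by (auto simp: nbhds_def)
      have "(U', f') \<in> G X x V f" unfolding G_mem using uf unfolding dom_H by auto
      then have ufG: "(U', f') \<in> Phi X x f V" using V by (simp add: Phi_def)
      show ?thesis unfolding P_def using V vgG ufG by blast
    qed
    show ?thesis unfolding sc sid using someI_ex[OF ex] uniq by blast
  qed
qed

lemma groupoid_part:
  assumes T1: "t1_space X" and x: "x \<in> topspace X" and y: "y \<in> topspace X"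
    and phi: "\<phi> \<in> Cxy X (homeo_l X) x y"
  shows "\<exists>\<psi>\<in>Cxy X (homeo_l X) y x.
        star_comp X (homeo_l X) x y x \<psi> \<phi> = star_id X (homeo_l X) x \<and> star_comp X (homeo_l X) y x y \<phi> \<psi> = star_id X (homeo_l X) y"
proof -
  have tn: "topspace X \<in> nbhds X y" using y by (simp add: nbhds_def)
  have "\<phi> (topspace X) \<in> stalk X (homeo_l X) x (topspace X)" using phi tn unfolding Cxy_def PiE_def Pi_def by blast
  then obtain U f where m: "(U, f) \<in> \<phi> (topspace X)" and "(U, f) \<in> germ_dom X (homeo_l X) x (topspace X)" "\<phi> (topspace X) = G X x (topspace X) f"
    by (rule stalk_ne)
  then have m2: "(U, f) \<in> G X x (topspace X) f" by simp
  then have d: "(U, f) \<in> germ_dom X (homeo_l X) x (topspace X)" unfolding G_mem dom_H by auto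
  have fxy: "f x = y" and phiE: "\<phi> = Phi X x f" using Cxy_char[OF T1 phi tn m] by auto
  have f: "f \<in> hom (homeo_l X) U (topspace X)" "x \<in> U" using d unfolding dom_H by auto
  obtain W g where W: "x \<in> W" "W \<subseteq> U" "openin X W" "openin X (f ` W)"
    "g \<in> hom (homeo_l X) (f ` W) W" "\<And>z. z \<in> W \<Longrightarrow> g (f z) = z" "\<And>w. w \<in> f ` W \<Longrightarrow> f (g w) = w"
    by (rule hom_local_inverse[OF f]) iprover
  have fxW: "f x \<in> f ` W" using W(1) by blast
  have d2: "(f ` W, g) \<in> germ_dom X (homeo_l X) (f x) W" using W fxW unfolding dom_H by auto
  have gfx: "g (f x) = x" using W(6,1) by simp
  have psi: "Phi X (f x) g \<in> Cxy X (homeo_l X) (f x) (g (f x))" by (rule Phi_in[OF d2])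
  have ag1: "agree X x (\<lambda>z. g (f z)) id" unfolding agree_def using W(1,3,6) by auto
  have c1: "star_comp X (homeo_l X) x (f x) x (Phi X (f x) g) (Phi X x f) = star_id X (homeo_l X) x"
    by (rule comp_id[OF x d d2 gfx ag1])
  have fxt: "f x \<in> topspace X" using fxy y by simp
  have d': "(U, f) \<in> germ_dom X (homeo_l X) (g (f x)) (topspace X)" using d gfx by simp
  have ag2: "agree X (f x) (\<lambda>z. f (g z)) id" unfolding agree_def using W(4,7) fxW by auto
  have c2: "star_comp X (homeo_l X) (f x) (g (f x)) (f x) (Phi X (g (f x)) f) (Phi X (f x) g) = star_id X (homeo_l X) (f x)"
    by (rule comp_id[OF fxt d2 d']) (use W(7) fxW ag2 in auto)
  show ?thesis
    using psi c1 c2 gfx fxy phiE by (intro bexI[of _ "Phi X (f x) g"]) auto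
qed



lemma sheaf_part: "hom_sheaves X (homeo_l X)"
  unfolding hom_sheaves_def restrict_cmp_incl
proof (intro allI impI)
  fix V U \<U> s
  assume a: "openin X V \<and> openin X U \<and> (\<forall>W\<in>\<U>. openin X W) \<and> \<Union> \<U> = U \<and>
       (\<forall>W\<in>\<U>. s W \<in> hom (homeo_l X) W V) \<and>
       (\<forall>W\<in>\<U>. \<forall>W'\<in>\<U>. restrict (s W) (W \<inter> W') = restrict (s W') (W \<inter> W'))"
  have V: "openin X V" and U: "openin X U" and cov: "\<Union> \<U> = U" and sW: "\<And>W. W \<in> \<U> \<Longrightarrow> s W \<in> hom (homeo_l X) W V"
    and cmpt: "\<And>W W'. W \<in> \<U> \<Longrightarrow> W' \<in> \<U> \<Longrightarrow> restrict (s W) (W \<inter> W') = restrict (s W') (W \<inter> W')"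
    using a by auto
  have agr: "s W z = s W' z" if "W \<in> \<U>" "W' \<in> \<U>" "z \<in> W" "z \<in> W'" for W W' z
  proof -
    have "restrict (s W) (W \<inter> W') z = restrict (s W') (W \<inter> W') z" using cmpt[OF that(1,2)] by simp
    then show ?thesis using that by simp
  qed
  define f where "f = (\<lambda>z\<in>U. s (SOME W. W \<in> \<U> \<and> z \<in> W) z)"
  have fz: "f z = s W z" if "W \<in> \<U>" "z \<in> W" for W z
  proof -
    have zU: "z \<in> U" using that cov by blast
    have ex: "\<exists>W. W \<in> \<U> \<and> z \<in> W" using that by blast
    have "(SOME W. W \<in> \<U> \<and> z \<in> W) \<in> \<U> \<and> z \<in> (SOME W. W \<in> \<U> \<and> z \<in> W)" by (rule someI_ex[OF ex])
    then have "s (SOME W. W \<in> \<U> \<and> z \<in> W) z = s W z" using agr that by blast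
    then show ?thesis unfolding f_def using zU by simp
  qed
  have extW: "s W \<in> extensional W" if "W \<in> \<U>" for W using sW[OF that] unfolding hom_H by simp
  have resf: "restrict f W = s W" if W: "W \<in> \<U>" for W
  proof (rule ext)
    fix z show "restrict f W z = s W z"
    proof (cases "z \<in> W")
      case True then show ?thesis using fz[OF W True] by simp
    next
      case False then show ?thesis using extW[OF W] by (simp add: extensional_def)
    qed
  qed
  have lf: "local_homeo X U V f"
    unfolding local_homeo_iff[OF V]
  proof (intro conjI ballI)
    show "f ` U \<subseteq> V"
    proof
      fix w assume "w \<in> f ` U"
      then obtain z where z: "z \<in> U" "w = f z" by blast
      then obtain W where W: "W \<in> \<U>" "z \<in> W" using cov by blast
      then have "w = s W z" using z fz by simp
      then show "w \<in> V" using W hom_img[OF sW[OF W(1)]] by blast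
    qed
  next
    fix x assume x: "x \<in> U"
    then obtain W where W: "W \<in> \<U>" "x \<in> W" using cov by blast
    obtain W1 where W1: "x \<in> W1" "W1 \<subseteq> W" "lh_at X (s W) W1" using hom_lh[OF sW[OF W(1)] W(2)] by blast
    have "lh_at X f W1"
    proof (rule lh_cong[OF W1(3)])
      fix z assume "z \<in> W1" then show "s W z = f z" using fz[OF W(1)] W1(2) by (metis subsetD)
    qed
    moreover have "W1 \<subseteq> U" using W1 W cov by blast
    ultimately show "\<exists>W. x \<in> W \<and> W \<subseteq> U \<and> lh_at X f W" using W1 by blast
  qed
  have fh: "f \<in> hom (homeo_l X) U V" unfolding hom_H using U V lf by (simp add: f_def)
  show "\<exists>!f. f \<in> hom (homeo_l X) U V \<and> (\<forall>W\<in>\<U>. restrict f W = s W)"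
  proof (rule ex1I[of _ f])
    show "f \<in> hom (homeo_l X) U V \<and> (\<forall>W\<in>\<U>. restrict f W = s W)" using fh resf by blast
  next
    fix g assume g: "g \<in> hom (homeo_l X) U V \<and> (\<forall>W\<in>\<U>. restrict g W = s W)"
    show "g = f"
    proof (rule ext)
      fix z show "g z = f z"
      proof (cases "z \<in> U")
        case True
        then obtain W where W: "W \<in> \<U>" "z \<in> W" using cov by blast
        have "g z = restrict g W z" using W by simp
        also have "\<dots> = s W z" using g W by simp
        also have "\<dots> = f z" using fz W by simp
        finally show ?thesis .
      next
        case False
        have "g \<in> extensional U" using g unfolding hom_H by simp
        then show ?thesis using False by (simp add: f_def extensional_def)
      qed
    qed
  qed
qed

theorem mainTheorem2:
  fixes X :: "'a topology"
  assumes "t1_space X"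
  shows "pseudogroup_sheaf X (homeo_l X)"
  unfolding pseudogroup_sheaf_def pre_pseudogroup_def
proof (intro conjI)
  show "t1_space X" by (rule assms)
  show "cat_over X (homeo_l X)" by (rule cat_over_H)
  show "\<forall>V x. openin X V \<and> x \<in> topspace X \<longrightarrow>
        bij_betw (\<lambda>(y, \<phi>). \<phi> V) (SIGMA y:V. Cxy X (homeo_l X) x y) (stalk X (homeo_l X) x V)"
    using bij_part[OF assms] by (intro allI impI) (elim conjE)
  show "\<forall>x\<in>topspace X. \<forall>y\<in>topspace X. \<forall>\<phi>\<in>Cxy X (homeo_l X) x y. \<exists>\<psi>\<in>Cxy X (homeo_l X) y x.
        star_comp X (homeo_l X) x y x \<psi> \<phi> = star_id X (homeo_l X) x \<and> star_comp X (homeo_l X) y x y \<phi> \<psi> = star_id X (homeo_l X) y"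
    by (intro ballI) (rule groupoid_part[OF assms])
  show "hom_sheaves X (homeo_l X)" by (rule sheaf_part)
qed


end
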